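(* Consider the sequentially observed MDP described in the context. Define functions on nonnegative vectors $\mathbf{x}\in\mathbb{R}^n_{\ge 0}$ by $J_N(\mathbf{x})=\mathbf{x}^T\mathbf{r}_N$ and, for $t=N-1,\dots,1$, $$J_t(\mathbf{x})=\max_{P_1(t),\dots,P_n(t)\in\mathcal{C}}\Big\{\mathbf{x}^T\mathbf{r}_t+J_{t+1}(M_t\mathbf{x})\Big\}.$$ Define vectors $V^*_t\in\mathbb{R}^n$ recursively by $V^*_N=\mathbf{r}_N$ and, for $t=N-1,\dots,1$ and $i=1,\dots,n$, $$V^*_t(i)=\max_{P_i(t)\in\mathcal{C}}\Big\{r_t(i)+M^{Ti}_tV^*_{t+1}\Big\}.$$ Then for every $t=1,\dots,N$ and every $\mathbf{x}\in\mathbb{R}^n_{\ge 0}$, $J_t(\mathbf{x})=\mathbf{x}^TV^*_t$.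
   Context: States $S=\{1,\dots,n\}$; at every state the available actions are $a_1,\dots,a_m$ (in this fixed order); decision epochs $t=1,\dots,N-1$ with $N\ge 2$. For each epoch $t$, state $i$, action index $k$, let $G_i(j,k,t)\ge 0$ with $\sum_{j}G_i(j,k,t)=1$ be the probability that taking action $a_k$ in state $i$ leads to state $j$. Rewards $r_t(i,a_k)\in\mathbb{R}$ for $t\le N-1$ and terminal rewards $r_N(i)\in\mathbb{R}$; $\mathbf{r}_N$ is the vector with entries $r_N(i)$. Model: at each epoch the agent in state $i$ observes, in phase $k=1,\dots,m-1$, the realized transition of action $a_k$ and accepts it (taking $a_k$) or rejects it and moves to phase $k+1$; if all $a_1,\dots,a_{m-1}$ are rejected, $a_m$ is taken. The decision variables at epoch $t$ are matrices $P_i(t)\in[0,1]^{n\times m}$, $i=1,\dots,n$, whose entry $P_i(j,k,t)$ is the probability of accepting an observed transition to state $j$ when in state $i$, phase $k$, epoch $t$, with the convention $P_i(j,m,t)=1$ for all $j$; $\mathcal{C}$ denotes the set of all such matrices. Dropping the index $t$: $q_i(a_k)=\sum_{j}G_i(j,k)P_i(j,k)$ (so $q_i(a_m)=1$); $p_i(a_k)=\big(\prod_{l=1}^{k-1}(1-q_i(a_l))\big)q_i(a_k)$ (empty product equal to $1$); $r_t(i)=\sum_{k=1}^m p_i(a_k)r_t(i,a_k)$, and $\mathbf{r}_t$ is the vector with entries $r_t(i)$; $M_t$ is the $n\times n$ matrix with entries $M_t(j,i)=\sum_{k=1}^m\big(\prod_{l=1}^{k-1}(1-q_i(a_l))\big)G_i(j,k)P_i(j,k)$.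 Thus $r_t(i)$ and the $i$-th column of $M_t$ depend only on $P_i(t)$; $M^{Ti}_t$ denotes the transpose of the $i$-th column of $M_t$. The state distribution evolves as $\mathbf{x}_{t+1}=M_t\mathbf{x}_t$. *)

theory Defs
  imports Complex_Main
begin

text \<open>States are 1..n, action indices 1..m, epochs t = 1..N-1.
  G t i j k = probability that action a_k in state i at epoch t leads to state j.
  r t i k = reward r_t(i,a_k); rN i = terminal reward r_N(i).
  A decision matrix P_i(t) is a function Pi :: nat => nat => real with
  Pi j k = acceptance probability of an observed transition to j in phase k.\<close>

definition in_C :: "nat \<Rightarrow> nat \<Rightarrow> (nat \<Rightarrow> nat \<Rightarrow> real) \<Rightarrow> bool" where
  "in_C n m Pi \<longleftrightarrow>
     (\<forall>j\<in>{1..n}. \<forall>k\<in>{1..m}. 0 \<le> Pi j k \<and> Pi j k \<le> 1) \<and> (\<forall>j\<in>{1..n}. Pi j m = 1)"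

definition qa :: "nat \<Rightarrow> (nat \<Rightarrow> nat \<Rightarrow> nat \<Rightarrow> nat \<Rightarrow> real) \<Rightarrow> nat \<Rightarrow> nat
                   \<Rightarrow> (nat \<Rightarrow> nat \<Rightarrow> real) \<Rightarrow> nat \<Rightarrow> real" where
  "qa n G t i Pi k = (\<Sum>j=1..n. G t i j k * Pi j k)"

definition pa :: "nat \<Rightarrow> (nat \<Rightarrow> nat \<Rightarrow> nat \<Rightarrow> nat \<Rightarrow> real) \<Rightarrow> nat \<Rightarrow> nat
                   \<Rightarrow> (nat \<Rightarrow> nat \<Rightarrow> real) \<Rightarrow> nat \<Rightarrow> real" where
  "pa n G t i Pi k = (\<Prod>l\<in>{1..<k}. 1 - qa n G t i Pi l) * qa n G t i Pi k"

definition rt :: "nat \<Rightarrow> nat \<Rightarrow> (nat \<Rightarrow> nat \<Rightarrow> nat \<Rightarrow> nat \<Rightarrow> real) \<Rightarrow> (nat \<Rightarrow> nat \<Rightarrow> nat \<Rightarrow> real)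
                   \<Rightarrow> nat \<Rightarrow> nat \<Rightarrow> (nat \<Rightarrow> nat \<Rightarrow> real) \<Rightarrow> real" where
  "rt n m G r t i Pi = (\<Sum>k=1..m. pa n G t i Pi k * r t i k)"

text \<open>M_t(j,i): the i-th column of M_t, depending only on P_i(t)\<close>
definition Mt :: "nat \<Rightarrow> nat \<Rightarrow> (nat \<Rightarrow> nat \<Rightarrow> nat \<Rightarrow> nat \<Rightarrow> real)
                   \<Rightarrow> nat \<Rightarrow> nat \<Rightarrow> (nat \<Rightarrow> nat \<Rightarrow> real) \<Rightarrow> nat \<Rightarrow> real" where
  "Mt n m G t i Pi j =
     (\<Sum>k=1..m. (\<Prod>l\<in>{1..<k}. 1 - qa n G t i Pi l) * G t i j k * Pi j k)"

text \<open>Value function with k remaining stages: Jrem k x = J_{N-k}(x).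
  The maximum over C is written as a supremum (it is attained, by compactness).\<close>
fun Jrem :: "nat \<Rightarrow> nat \<Rightarrow> nat \<Rightarrow> (nat \<Rightarrow> nat \<Rightarrow> nat \<Rightarrow> nat \<Rightarrow> real)
               \<Rightarrow> (nat \<Rightarrow> nat \<Rightarrow> nat \<Rightarrow> real) \<Rightarrow> (nat \<Rightarrow> real)
               \<Rightarrow> nat \<Rightarrow> (nat \<Rightarrow> real) \<Rightarrow> real" where
  "Jrem n m N G r rN 0 x = (\<Sum>i=1..n. x i * rN i)"
| "Jrem n m N G r rN (Suc k) x =
     (let t = N - Suc k in
      Sup {(\<Sum>i=1..n. x i * rt n m G r t i (P i))
             + Jrem n m N G r rN k (\<lambda>j. \<Sum>i=1..n. Mt n m G t i (P i) j * x i)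
           | P. \<forall>i\<in>{1..n}. in_C n m (P i)})"

definition J :: "nat \<Rightarrow> nat \<Rightarrow> nat \<Rightarrow> (nat \<Rightarrow> nat \<Rightarrow> nat \<Rightarrow> nat \<Rightarrow> real)
               \<Rightarrow> (nat \<Rightarrow> nat \<Rightarrow> nat \<Rightarrow> real) \<Rightarrow> (nat \<Rightarrow> real)
               \<Rightarrow> nat \<Rightarrow> (nat \<Rightarrow> real) \<Rightarrow> real" where
  "J n m N G r rN t x = Jrem n m N G r rN (N - t) x"

fun Vrem :: "nat \<Rightarrow> nat \<Rightarrow> nat \<Rightarrow> (nat \<Rightarrow> nat \<Rightarrow> nat \<Rightarrow> nat \<Rightarrow> real)
               \<Rightarrow> (nat \<Rightarrow> nat \<Rightarrow> nat \<Rightarrow> real) \<Rightarrow> (nat \<Rightarrow> real)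
               \<Rightarrow> nat \<Rightarrow> nat \<Rightarrow> real" where
  "Vrem n m N G r rN 0 i = rN i"
| "Vrem n m N G r rN (Suc k) i =
     (let t = N - Suc k in
      Sup {rt n m G r t i Pi + (\<Sum>j=1..n. Mt n m G t i Pi j * Vrem n m N G r rN k j)
           | Pi. in_C n m Pi})"

definition Vstar :: "nat \<Rightarrow> nat \<Rightarrow> nat \<Rightarrow> (nat \<Rightarrow> nat \<Rightarrow> nat \<Rightarrow> nat \<Rightarrow> real)
               \<Rightarrow> (nat \<Rightarrow> nat \<Rightarrow> nat \<Rightarrow> real) \<Rightarrow> (nat \<Rightarrow> real)
               \<Rightarrow> nat \<Rightarrow> nat \<Rightarrow> real" where
  "Vstar n m N G r rN t i = Vrem n m N G r rN (N - t) i"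

end

theory Submission
  imports Defs
begin

lemma sup_sum:
  fixes f :: "nat \<Rightarrow> 'c \<Rightarrow> real" and x :: "nat \<Rightarrow> real"
  assumes A: "finite A" and xpos: "\<And>i. i \<in> A \<Longrightarrow> x i \<ge> 0"
    and ne: "\<exists>c. C c"
    and bdd: "\<And>i. i \<in> A \<Longrightarrow> bdd_above {f i c | c. C c}"
  shows "Sup {\<Sum>i\<in>A. x i * f i (P i) | P. \<forall>i\<in>A. C (P i)}
         = (\<Sum>i\<in>A. x i * Sup {f i c | c. C c})"
proof (rule cSup_eq_non_empty)
  obtain c0 where c0: "C c0" using ne by blast
  have "\<exists>P. (\<Sum>i\<in>A. x i * f i c0) = (\<Sum>i\<in>A. x i * f i (P i)) \<and> (\<forall>i\<in>A. C (P i))"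
    by (rule exI[of _ "\<lambda>_. c0"]) (simp add: c0)
  then show "{\<Sum>i\<in>A. x i * f i (P i) | P. \<forall>i\<in>A. C (P i)} \<noteq> {}"
    by blast
  have ne_i: "{f i c | c. C c} \<noteq> {}" for i using c0 by blast
  fix y assume "y \<in> {\<Sum>i\<in>A. x i * f i (P i) | P. \<forall>i\<in>A. C (P i)}"
  then obtain P where y: "y = (\<Sum>i\<in>A. x i * f i (P i))" and P: "\<forall>i\<in>A. C (P i)" by blast
  show "y \<le> (\<Sum>i\<in>A. x i * Sup {f i c | c. C c})"
    unfolding y
  proof (rule sum_mono)
    fix i assume i: "i \<in> A"
    have "f i (P i) \<le> Sup {f i c | c. C c}"
      using P i bdd[OF i] by (intro cSup_upper) auto
    then show "x i * f i (P i) \<le> x i * Sup {f i c | c. C c}"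
      using xpos[OF i] by (rule mult_left_mono)
  qed
next
  fix y assume ub: "\<And>z. z \<in> {\<Sum>i\<in>A. x i * f i (P i) | P. \<forall>i\<in>A. C (P i)} \<Longrightarrow> z \<le> y"
  have ne_i: "{f i c | c. C c} \<noteq> {}" for i using ne by blast
  show "(\<Sum>i\<in>A. x i * Sup {f i c | c. C c}) \<le> y"
  proof (rule field_le_epsilon)
    fix e :: real assume e: "0 < e"
    define s where "s = (\<Sum>i\<in>A. x i)"
    have s0: "s \<ge> 0" unfolding s_def using xpos by (simp add: sum_nonneg)
    define d where "d = e / (1 + s)"
    have d0: "d > 0" using e s0 by (simp add: d_def)
    have "\<forall>i\<in>A. \<exists>c. C c \<and> Sup {f i c | c. C c} - d < f i c"
    proof
      fix i assume i: "i \<in> A"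
      have "Sup {f i c | c. C c} - d < Sup {f i c | c. C c}" using d0 by simp
      then obtain z where "z \<in> {f i c | c. C c}" "Sup {f i c | c. C c} - d < z"
        using less_cSup_iff[OF ne_i bdd[OF i]] by blast
      then show "\<exists>c. C c \<and> Sup {f i c | c. C c} - d < f i c" by blast
    qed
    then obtain P where P: "\<And>i. i \<in> A \<Longrightarrow> C (P i) \<and> Sup {f i c | c. C c} - d < f i (P i)"
      by metis
    have "(\<Sum>i\<in>A. x i * f i (P i)) \<le> y" using P by (intro ub) blast
    moreover have "(\<Sum>i\<in>A. x i * Sup {f i c | c. C c}) \<le> (\<Sum>i\<in>A. x i * f i (P i)) + d * s"
    proof -
      have "(\<Sum>i\<in>A. x i * Sup {f i c | c. C c}) \<le> (\<Sum>i\<in>A. x i * (f i (P i) + d))"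
      proof (intro sum_mono mult_left_mono)
        fix i assume i: "i \<in> A"
        show "Sup {f i c | c. C c} \<le> f i (P i) + d" using P[OF i] by linarith
        show "0 \<le> x i" using xpos[OF i] .
      qed
      also have "\<dots> = (\<Sum>i\<in>A. x i * f i (P i)) + d * s"
        by (simp add: s_def algebra_simps sum.distrib sum_distrib_left)
      finally show ?thesis .
    qed
    moreover have "d * s \<le> e"
    proof -
      have "d * s \<le> d * (1 + s)" using d0 by simp
      also have "\<dots> = e" using s0 by (simp add: d_def)
      finally show ?thesis .
    qed
    ultimately show "(\<Sum>i\<in>A. x i * Sup {f i c | c. C c}) \<le> y + e" by linarith
  qed
qed

lemma qa_bounds:
  assumes Gn: "\<forall>j\<in>{1..n}. \<forall>k\<in>{1..m}. G t i j k \<ge> 0"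
    and Gs: "\<forall>k\<in>{1..m}. (\<Sum>j=1..n. G t i j k) = 1"
    and C: "in_C n m Pi" and k: "k \<in> {1..m}"
  shows "0 \<le> qa n G t i Pi k \<and> qa n G t i Pi k \<le> 1"
proof -
  have P: "\<forall>j\<in>{1..n}. 0 \<le> Pi j k \<and> Pi j k \<le> 1" using C k by (auto simp: in_C_def)
  have "0 \<le> qa n G t i Pi k" unfolding qa_def using Gn P k by (intro sum_nonneg) auto
  moreover have "qa n G t i Pi k \<le> (\<Sum>j=1..n. G t i j k)" unfolding qa_def
    using Gn P k by (intro sum_mono) (simp add: mult_left_le)
  ultimately show ?thesis using Gs k by simp
qed

lemma prod_bounds:
  assumes Gn: "\<forall>j\<in>{1..n}. \<forall>k\<in>{1..m}. G t i j k \<ge> 0"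
    and Gs: "\<forall>k\<in>{1..m}. (\<Sum>j=1..n. G t i j k) = 1"
    and C: "in_C n m Pi" and k: "k \<in> {1..m}"
  shows "0 \<le> (\<Prod>l\<in>{1..<k}. 1 - qa n G t i Pi l) \<and> (\<Prod>l\<in>{1..<k}. 1 - qa n G t i Pi l) \<le> 1"
proof -
  have "\<forall>l\<in>{1..<k}. 0 \<le> 1 - qa n G t i Pi l \<and> 1 - qa n G t i Pi l \<le> 1"
    using qa_bounds[where G=G and t=t and i=i, OF Gn Gs C] k by fastforce
  then show ?thesis by (auto intro: prod_nonneg prod_le_1)
qed

lemma Mt_bounds:
  assumes Gn: "\<forall>j\<in>{1..n}. \<forall>k\<in>{1..m}. G t i j k \<ge> 0"
    and Gs: "\<forall>k\<in>{1..m}. (\<Sum>j=1..n. G t i j k) = 1"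
    and C: "in_C n m Pi" and j: "j \<in> {1..n}"
  shows "0 \<le> Mt n m G t i Pi j \<and> Mt n m G t i Pi j \<le> (\<Sum>k=1..m. G t i j k)"
proof -
  have "\<forall>k\<in>{1..m}. 0 \<le> (\<Prod>l\<in>{1..<k}. 1 - qa n G t i Pi l) * G t i j k * Pi j k
        \<and> (\<Prod>l\<in>{1..<k}. 1 - qa n G t i Pi l) * G t i j k * Pi j k \<le> G t i j k"
  proof
    fix k assume k: "k \<in> {1..m}"
    have p: "0 \<le> (\<Prod>l\<in>{1..<k}. 1 - qa n G t i Pi l) \<and> (\<Prod>l\<in>{1..<k}. 1 - qa n G t i Pi l) \<le> 1"
      by (rule prod_bounds[where G=G and t=t and i=i, OF Gn Gs C k])
    have P: "0 \<le> Pi j k \<and> Pi j k \<le> 1" using C k j by (auto simp: in_C_def)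
    have g: "0 \<le> G t i j k" using Gn j k by auto
    have "(\<Prod>l\<in>{1..<k}. 1 - qa n G t i Pi l) * Pi j k \<le> 1"
      using p P by (metis mult_le_one)
    then have "(\<Prod>l\<in>{1..<k}. 1 - qa n G t i Pi l) * G t i j k * Pi j k \<le> G t i j k"
      using g by (metis mult.commute mult.left_commute mult_left_le)
    then show "0 \<le> (\<Prod>l\<in>{1..<k}. 1 - qa n G t i Pi l) * G t i j k * Pi j k
        \<and> (\<Prod>l\<in>{1..<k}. 1 - qa n G t i Pi l) * G t i j k * Pi j k \<le> G t i j k"
      using p P g by simp
  qed
  then show ?thesis unfolding Mt_def by (auto intro: sum_nonneg sum_mono)
qed

lemma rt_bound:
  assumes Gn: "\<forall>j\<in>{1..n}. \<forall>k\<in>{1..m}. G t i j k \<ge> 0"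
    and Gs: "\<forall>k\<in>{1..m}. (\<Sum>j=1..n. G t i j k) = 1"
    and C: "in_C n m Pi"
  shows "rt n m G r t i Pi \<le> (\<Sum>k=1..m. \<bar>r t i k\<bar>)"
  unfolding rt_def
proof (rule sum_mono)
  fix k assume k: "k \<in> {1..m}"
  have "0 \<le> pa n G t i Pi k \<and> pa n G t i Pi k \<le> 1"
    using prod_bounds[where G=G and t=t and i=i, OF Gn Gs C k] qa_bounds[where G=G and t=t and i=i, OF Gn Gs C k] unfolding pa_def
    by (metis mult_le_one mult_nonneg_nonneg)
  then have "\<bar>pa n G t i Pi k * r t i k\<bar> \<le> \<bar>r t i k\<bar>"
    by (simp add: abs_mult mult_left_le_one_le)
  then show "pa n G t i Pi k * r t i k \<le> \<bar>r t i k\<bar>" by linarith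
qed

lemma f_bdd:
  assumes Gn: "\<forall>j\<in>{1..n}. \<forall>k\<in>{1..m}. G t i j k \<ge> 0"
    and Gs: "\<forall>k\<in>{1..m}. (\<Sum>j=1..n. G t i j k) = 1"
  shows "bdd_above {rt n m G r t i Pi + (\<Sum>j=1..n. Mt n m G t i Pi j * V j) | Pi. in_C n m Pi}"
proof (rule bdd_aboveI)
  fix z assume "z \<in> {rt n m G r t i Pi + (\<Sum>j=1..n. Mt n m G t i Pi j * V j) | Pi. in_C n m Pi}"
  then obtain Pi where z: "z = rt n m G r t i Pi + (\<Sum>j=1..n. Mt n m G t i Pi j * V j)"
    and C: "in_C n m Pi" by blast
  have "(\<Sum>j=1..n. Mt n m G t i Pi j * V j) \<le> (\<Sum>j=1..n. (\<Sum>k=1..m. G t i j k) * \<bar>V j\<bar>)"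
  proof (rule sum_mono)
    fix j assume j: "j \<in> {1..n}"
    note b = Mt_bounds[where G=G and t=t and i=i, OF Gn Gs C j]
    have "Mt n m G t i Pi j * V j \<le> Mt n m G t i Pi j * \<bar>V j\<bar>"
      using b by (intro mult_left_mono) auto
    also have "\<dots> \<le> (\<Sum>k=1..m. G t i j k) * \<bar>V j\<bar>"
      using b by (intro mult_right_mono) auto
    finally show "Mt n m G t i Pi j * V j \<le> (\<Sum>k=1..m. G t i j k) * \<bar>V j\<bar>" .
  qed
  then show "z \<le> (\<Sum>k=1..m. \<bar>r t i k\<bar>) + (\<Sum>j=1..n. (\<Sum>k=1..m. G t i j k) * \<bar>V j\<bar>)"
    using z rt_bound[where G=G and t=t and i=i, OF Gn Gs C, of r] by linarith
qed

lemma inC_ne: "in_C n m (\<lambda>j k. 1)" by (simp add: in_C_def)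

lemma main_lemma:
  fixes n m N :: nat
    and G :: "nat \<Rightarrow> nat \<Rightarrow> nat \<Rightarrow> nat \<Rightarrow> real"
    and r :: "nat \<Rightarrow> nat \<Rightarrow> nat \<Rightarrow> real"
    and rN :: "nat \<Rightarrow> real"
  assumes G_nonneg: "\<And>t i j k. t \<in> {1..N-1} \<Longrightarrow> i \<in> {1..n} \<Longrightarrow> j \<in> {1..n} \<Longrightarrow> k \<in> {1..m}
                     \<Longrightarrow> G t i j k \<ge> 0"
    and G_stoch: "\<And>t i k. t \<in> {1..N-1} \<Longrightarrow> i \<in> {1..n} \<Longrightarrow> k \<in> {1..m}
                     \<Longrightarrow> (\<Sum>j=1..n. G t i j k) = 1"
  shows "k \<le> N - 1 \<Longrightarrow> \<forall>x. (\<forall>i\<in>{1..n}. x i \<ge> 0) \<longrightarrow>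
           Jrem n m N G r rN k x = (\<Sum>i=1..n. x i * Vrem n m N G r rN k i)"
proof (induction k)
  case 0
  then show ?case by simp
next
  case (Suc k)
  define t where "t = N - Suc k"
  have t: "t \<in> {1..N-1}" using Suc.prems by (auto simp: t_def)
  define V where "V = Vrem n m N G r rN k"
  define f where "f i Pi = rt n m G r t i Pi + (\<Sum>j=1..n. Mt n m G t i Pi j * V j)" for i Pi
  have Gn: "\<forall>j\<in>{1..n}. \<forall>k\<in>{1..m}. G t i j k \<ge> 0" if "i \<in> {1..n}" for i
    using G_nonneg t that by auto
  have Gs: "\<forall>k\<in>{1..m}. (\<Sum>j=1..n. G t i j k) = 1" if "i \<in> {1..n}" for i
    using G_stoch t that by auto
  have IH: "\<forall>x. (\<forall>i\<in>{1..n}. x i \<ge> 0) \<longrightarrow> Jrem n m N G r rN k x = (\<Sum>i=1..n. x i * V i)"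
    using Suc by (simp add: V_def)
  show ?case
  proof (intro allI impI)
    fix x :: "nat \<Rightarrow> real" assume x: "\<forall>i\<in>{1..n}. x i \<ge> 0"
    have eq: "(\<Sum>i=1..n. x i * rt n m G r t i (P i))
             + Jrem n m N G r rN k (\<lambda>j. \<Sum>i=1..n. Mt n m G t i (P i) j * x i)
           = (\<Sum>i=1..n. x i * f i (P i))" if P: "\<forall>i\<in>{1..n}. in_C n m (P i)" for P
    proof -
      have nn: "\<forall>j\<in>{1..n}. (\<Sum>i=1..n. Mt n m G t i (P i) j * x i) \<ge> 0"
      proof
        fix j assume j: "j \<in> {1..n}"
        show "(\<Sum>i=1..n. Mt n m G t i (P i) j * x i) \<ge> 0"
        proof (rule sum_nonneg)
          fix i assume i: "i \<in> {1..n}"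
          have "0 \<le> Mt n m G t i (P i) j"
            using Mt_bounds[where G=G and t=t and i=i, OF Gn[OF i] Gs[OF i] _ j] P i by blast
          then show "0 \<le> Mt n m G t i (P i) j * x i" using x i by simp
        qed
      qed
      have "Jrem n m N G r rN k (\<lambda>j. \<Sum>i=1..n. Mt n m G t i (P i) j * x i)
            = (\<Sum>j=1..n. (\<Sum>i=1..n. Mt n m G t i (P i) j * x i) * V j)"
        using nn by (intro IH[rule_format]) simp
      also have "\<dots> = (\<Sum>i=1..n. x i * (\<Sum>j=1..n. Mt n m G t i (P i) j * V j))"
        unfolding sum_distrib_left sum_distrib_right by (subst sum.swap) (simp add: mult_ac)
      finally show ?thesis
        by (simp add: f_def distrib_left sum.distrib)
    qed
    have "Jrem n m N G r rN (Suc k) x =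
          Sup {(\<Sum>i=1..n. x i * rt n m G r t i (P i))
             + Jrem n m N G r rN k (\<lambda>j. \<Sum>i=1..n. Mt n m G t i (P i) j * x i)
           | P. \<forall>i\<in>{1..n}. in_C n m (P i)}"
      unfolding t_def Jrem.simps(2) Let_def by (rule refl)
    also have "{(\<Sum>i=1..n. x i * rt n m G r t i (P i))
             + Jrem n m N G r rN k (\<lambda>j. \<Sum>i=1..n. Mt n m G t i (P i) j * x i)
           | P. \<forall>i\<in>{1..n}. in_C n m (P i)}
          = {\<Sum>i\<in>{1..n}. x i * f i (P i) | P. \<forall>i\<in>{1..n}. in_C n m (P i)}"
    proof (intro Collect_cong ex_cong1 iffI)
      fix z P
      assume "z = (\<Sum>i=1..n. x i * rt n m G r t i (P i))
             + Jrem n m N G r rN k (\<lambda>j. \<Sum>i=1..n. Mt n m G t i (P i) j * x i)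
              \<and> (\<forall>i\<in>{1..n}. in_C n m (P i))"
      then show "z = (\<Sum>i\<in>{1..n}. x i * f i (P i)) \<and> (\<forall>i\<in>{1..n}. in_C n m (P i))"
        using eq[of P] by simp
    next
      fix z P
      assume "z = (\<Sum>i\<in>{1..n}. x i * f i (P i)) \<and> (\<forall>i\<in>{1..n}. in_C n m (P i))"
      then show "z = (\<Sum>i=1..n. x i * rt n m G r t i (P i))
             + Jrem n m N G r rN k (\<lambda>j. \<Sum>i=1..n. Mt n m G t i (P i) j * x i)
              \<and> (\<forall>i\<in>{1..n}. in_C n m (P i))"
        using eq[of P] by simp
    qed
    also have "Sup \<dots> = (\<Sum>i\<in>{1..n}. x i * Sup {f i c | c. in_C n m c})"
      using x inC_ne f_bdd[where G=G and t=t, OF Gn Gs]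
      by (intro sup_sum) (auto simp: f_def)
    also have "\<dots> = (\<Sum>i=1..n. x i * Vrem n m N G r rN (Suc k) i)"
      unfolding Vrem.simps(2) f_def V_def t_def Let_def by (rule refl)
    finally show "Jrem n m N G r rN (Suc k) x = (\<Sum>i=1..n. x i * Vrem n m N G r rN (Suc k) i)" .
  qed
qed

theorem proposition1:
  fixes n m N :: nat
    and G :: "nat \<Rightarrow> nat \<Rightarrow> nat \<Rightarrow> nat \<Rightarrow> real"
    and r :: "nat \<Rightarrow> nat \<Rightarrow> nat \<Rightarrow> real"
    and rN :: "nat \<Rightarrow> real"
  assumes "n \<ge> 1" and "m \<ge> 1" and "N \<ge> 2"
    and G_nonneg: "\<And>t i j k. t \<in> {1..N-1} \<Longrightarrow> i \<in> {1..n} \<Longrightarrow> j \<in> {1..n} \<Longrightarrow> k \<in> {1..m}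
                     \<Longrightarrow> G t i j k \<ge> 0"
    and G_stoch: "\<And>t i k. t \<in> {1..N-1} \<Longrightarrow> i \<in> {1..n} \<Longrightarrow> k \<in> {1..m}
                     \<Longrightarrow> (\<Sum>j=1..n. G t i j k) = 1"
  shows "\<forall>t\<in>{1..N}. \<forall>x. (\<forall>i\<in>{1..n}. x i \<ge> 0) \<longrightarrow>
           J n m N G r rN t x = (\<Sum>i=1..n. x i * Vstar n m N G r rN t i)"
proof (intro ballI allI impI)
  fix t x assume t: "t \<in> {1..N}" and x: "\<forall>i\<in>{1..n}. (x::nat\<Rightarrow>real) i \<ge> 0"
  have "N - t \<le> N - 1" using t by auto
  from main_lemma[where N=N and n=n and m=m and G=G and r=r and rN=rN, OF G_nonneg G_stoch this] x
  show "J n m N G r rN t x = (\<Sum>i=1..n. x i * Vstar n m N G r rN t i)"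
    by (simp add: J_def Vstar_def)
qed

end
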